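(* Let $\zeta(r,n)=n^{-1/2}/(52r^2)$. There is no infinite family of megastars that is up-to-$\zeta$ fixating.
   Context: Moran process: given a directed graph $G$ and fitness $r>1$, one vertex (the initial mutant) is a mutant, the rest non-mutants. At each step a vertex $v$ is chosen with probability proportional to fitness (mutants $r$, non-mutants $1$), an out-neighbour $w$ of $v$ is chosen uniformly at random and the state of $v$ is copied to $w$. Extinction: eventually no mutants. An infinite family $\Upsilon$ of directed graphs is up-to-$\zeta$ fixating if for every $r>1$ there is $n_0$ such that for every $G\in\Upsilon$ with $n\ge n_0$ vertices, the extinction probability of the Moran process with fitness $r$ on $G$ from a uniformly random initial mutant is at most $\zeta(r,n)$. The $(k,\ell,m)$-megastar (for positive integers $k,\ell,m$): disjoint union of reservoirs $R_1,\dots,R_\ell$ (size $m$), cliques $K_1,\dots,K_\ell$ (size $k$), feeders $a_1,\dots,a_\ell$, and centre $v^*$; edges from $v^*$ to all reservoir vertices, from each vertex of $R_i$ to $a_i$, from $a_i$ to each vertex of $K_i$, both directions between distinct vertices of each $K_i$, and from every clique vertex to $v^*$. An infinite family of megastars is an infinite set of such graphs. *)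

theory Defs
  imports Complex_Main
begin

text \<open>A directed graph is a pair (V, E) with V a finite vertex set and E \<subseteq> V \<times> V.
  The state of the Moran process is the set S \<subseteq> V of mutants.\<close>

definition out_nbrs :: "('a \<times> 'a) set \<Rightarrow> 'a \<Rightarrow> 'a set" where
  "out_nbrs E v = {w. (v, w) \<in> E}"

definition fitness :: "real \<Rightarrow> 'a set \<Rightarrow> 'a \<Rightarrow> real" where
  "fitness r S v = (if v \<in> S then r else 1)"

definition total_fitness :: "'a set \<Rightarrow> real \<Rightarrow> 'a set \<Rightarrow> real" where
  "total_fitness V r S = (\<Sum>v\<in>V. fitness r S v)"

text \<open>A vertex v is chosen with probability proportional to fitness, an out-neighbour w of v is
  chosen uniformly, and the state of v is copied to w.  (A vertex without out-neighbours,
  which does not occur in megastars, leaves the state unchanged.)\<close>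
definition moran_step :: "'a set \<Rightarrow> ('a \<times> 'a) set \<Rightarrow> real \<Rightarrow> 'a set \<Rightarrow> 'a set \<Rightarrow> real" where
  "moran_step V E r S S' =
     (\<Sum>v\<in>V. fitness r S v / total_fitness V r S *
        (if out_nbrs E v = {} then (if S' = S then 1 else 0)
         else (\<Sum>w\<in>out_nbrs E v.
                 (if (if v \<in> S then insert w S else S - {w}) = S' then 1 else 0)
                 / real (card (out_nbrs E v)))))"

fun moran_prob :: "'a set \<Rightarrow> ('a \<times> 'a) set \<Rightarrow> real \<Rightarrow> nat \<Rightarrow> 'a set \<Rightarrow> 'a set \<Rightarrow> real" where
  "moran_prob V E r 0 S S' = (if S = S' then 1 else 0)"
| "moran_prob V E r (Suc t) S S' =
     (\<Sum>S''\<in>Pow V. moran_step V E r S S'' * moran_prob V E r t S'' S')"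

text \<open>Extinction probability from initial mutant set S: probability of eventually reaching
  the (absorbing) state with no mutants, i.e. the supremum (= limit, as the sequence is
  nondecreasing and bounded by 1) of the probability of having no mutants after t steps.\<close>
definition extinction_prob :: "'a set \<Rightarrow> ('a \<times> 'a) set \<Rightarrow> real \<Rightarrow> 'a set \<Rightarrow> real" where
  "extinction_prob V E r S = (SUP t. moran_prob V E r t S {})"

definition extinction_prob_uniform :: "'a set \<Rightarrow> ('a \<times> 'a) set \<Rightarrow> real \<Rightarrow> real" where
  "extinction_prob_uniform V E r = (\<Sum>v\<in>V. extinction_prob V E r {v}) / real (card V)"

definition up_to_fixating ::
    "(real \<Rightarrow> nat \<Rightarrow> real) \<Rightarrow> ('a set \<times> ('a \<times> 'a) set) set \<Rightarrow> bool" where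
  "up_to_fixating \<zeta> \<Upsilon> \<longleftrightarrow>
     (\<forall>r > 1. \<exists>n0. \<forall>(V, E) \<in> \<Upsilon>. card V \<ge> n0 \<longrightarrow>
        extinction_prob_uniform V E r \<le> \<zeta> r (card V))"

datatype mvertex = Centre | Res nat nat | Feeder nat | Clq nat nat

definition megastar :: "nat \<Rightarrow> nat \<Rightarrow> nat \<Rightarrow> mvertex set \<times> (mvertex \<times> mvertex) set" where
  "megastar k l m =
    (insert Centre ({Res i j | i j. i < l \<and> j < m} \<union> {Feeder i | i. i < l}
                    \<union> {Clq i j | i j. i < l \<and> j < k}),
     {(Centre, Res i j) | i j. i < l \<and> j < m}
     \<union> {(Res i j, Feeder i) | i j. i < l \<and> j < m}
     \<union> {(Feeder i, Clq i j) | i j. i < l \<and> j < k}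
     \<union> {(Clq i j, Clq i j') | i j j'. i < l \<and> j < k \<and> j' < k \<and> j \<noteq> j'}
     \<union> {(Clq i j, Centre) | i j. i < l \<and> j < k})"

definition megastars :: "(mvertex set \<times> (mvertex \<times> mvertex) set) set" where
  "megastars = {megastar k l m | k l m. 0 < k \<and> 0 < l \<and> 0 < m}"

definition zeta :: "real \<Rightarrow> nat \<Rightarrow> real" where
  "zeta r n = real n powr (-1/2) / (52 * r^2)"

end

theory Submission
  imports Defs
begin


definition res :: "'a set \<Rightarrow> 'a \<Rightarrow> 'a \<Rightarrow> 'a set" where
  "res S u w = (if u \<in> S then insert w S else S - {w})"

locale gctx =
  fixes V :: "'a set" and E :: "('a \<times> 'a) set" and r :: real
  assumes finV: "finite V" and Vne: "V \<noteq> {}" and EV: "E \<subseteq> V \<times> V"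
    and outne: "\<And>u. u \<in> V \<Longrightarrow> out_nbrs E u \<noteq> {}" and rpos: "r > 0"
begin

lemma out_sub: "out_nbrs E u \<subseteq> V"
  using EV by (auto simp: out_nbrs_def)

lemma fin_out: "finite (out_nbrs E u)"
  using out_sub finV finite_subset by blast

lemma card_out_pos: "u \<in> V \<Longrightarrow> card (out_nbrs E u) > 0"
  using fin_out outne card_gt_0_iff by blast

lemma fit_pos: "fitness r S u > 0"
  using rpos by (simp add: fitness_def)

lemma W_pos: "total_fitness V r S > 0"
  unfolding total_fitness_def using finV Vne fit_pos by (intro sum_pos) blast+

lemma fitsum: "(\<Sum>u\<in>V. fitness r S u / total_fitness V r S) = 1"
  using W_pos[of S] unfolding sum_divide_distrib[symmetric] by (simp add: total_fitness_def)

lemma ind_sum: "finite A \<Longrightarrow> (\<Sum>w\<in>A. (if P w then 1 else 0) / (c::real)) = real (card {w\<in>A. P w}) / c"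
  by (simp add: sum_divide_distrib[symmetric] sum.inter_filter[symmetric])

definition trm :: "'a set \<Rightarrow> 'a set \<Rightarrow> 'a \<Rightarrow> real" where
  "trm S S' u = fitness r S u / total_fitness V r S *
     (real (card {w \<in> out_nbrs E u. res S u w = S'}) / real (card (out_nbrs E u)))"

lemma trm_nonneg: "trm S S' u \<ge> 0"
  unfolding trm_def using fit_pos[of S u] W_pos[of S] by (intro mult_nonneg_nonneg divide_nonneg_nonneg) auto

lemma step_eq: "moran_step V E r S S' = (\<Sum>u\<in>V. trm S S' u)"
  unfolding moran_step_def trm_def
  by (rule sum.cong, simp, simp add: outne ind_sum[OF fin_out] res_def)

lemma step_nonneg: "moran_step V E r S S' \<ge> 0"
  by (simp add: step_eq sum_nonneg trm_nonneg)

lemma step_lower: "U \<subseteq> V \<Longrightarrow> moran_step V E r S S' \<ge> (\<Sum>u\<in>U. trm S S' u)"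
  unfolding step_eq by (rule sum_mono2[OF finV], auto simp: trm_nonneg)

lemma rowsum: assumes "S \<subseteq> V" shows "(\<Sum>S'\<in>Pow V. moran_step V E r S S') = 1"
proof -
  have "(\<Sum>S'\<in>Pow V. moran_step V E r S S') =
     (\<Sum>S'\<in>Pow V. \<Sum>u\<in>V. fitness r S u / total_fitness V r S *
         (\<Sum>w\<in>out_nbrs E u. (if res S u w = S' then 1 else 0) / real (card (out_nbrs E u))))"
    unfolding moran_step_def by (intro sum.cong refl, simp add: outne res_def)
  also have "\<dots> = (\<Sum>u\<in>V. fitness r S u / total_fitness V r S *
         (\<Sum>w\<in>out_nbrs E u. \<Sum>S'\<in>Pow V. (if res S u w = S' then 1 else 0) / real (card (out_nbrs E u))))"
    by (subst sum.swap, simp add: sum_distrib_left, subst (2) sum.swap, simp)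
  also have "\<dots> = (\<Sum>u\<in>V. fitness r S u / total_fitness V r S *
         (\<Sum>w\<in>out_nbrs E u. 1 / real (card (out_nbrs E u))))"
  proof (intro sum.cong refl arg_cong2[where f="(*)"])
    fix u w assume "w \<in> out_nbrs E u"
    then have "res S u w \<in> Pow V" using assms out_sub by (auto simp: res_def)
    then show "(\<Sum>S'\<in>Pow V. (if res S u w = S' then 1 else 0) / real (card (out_nbrs E u)))
       = 1 / real (card (out_nbrs E u))"
      using finV by (simp add: sum.delta[of "Pow V"] if_distrib[of "\<lambda>x. x / _"] cong: if_cong)
  qed
  also have "\<dots> = (\<Sum>u\<in>V. fitness r S u / total_fitness V r S)"
    by (intro sum.cong refl, simp, metis card_out_pos less_irrefl of_nat_0_less_iff)
  finally show ?thesis using fitsum by simp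
qed

definition dtrm :: "'a set \<Rightarrow> 'a \<Rightarrow> real" where
  "dtrm S u = fitness r S u / total_fitness V r S *
     (real (card {w \<in> out_nbrs E u. (w \<in> S) \<noteq> (u \<in> S)}) / real (card (out_nbrs E u)))"

lemma dtrm_nonneg: "dtrm S u \<ge> 0"
  unfolding dtrm_def using fit_pos[of S u] W_pos[of S] by (intro mult_nonneg_nonneg divide_nonneg_nonneg) auto

lemma trm_stay: assumes "u \<in> V" shows "trm S S u = fitness r S u / total_fitness V r S - dtrm S u"
proof -
  have e: "{w \<in> out_nbrs E u. res S u w = S} = {w \<in> out_nbrs E u. (w \<in> S) = (u \<in> S)}"
    by (auto simp: res_def)
  have c: "card {w \<in> out_nbrs E u. (w \<in> S) = (u \<in> S)} + card {w \<in> out_nbrs E u. (w \<in> S) \<noteq> (u \<in> S)}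
     = card (out_nbrs E u)"
  proof -
    have "out_nbrs E u = {w \<in> out_nbrs E u. (w \<in> S) = (u \<in> S)} \<union> {w \<in> out_nbrs E u. (w \<in> S) \<noteq> (u \<in> S)}"
      by blast
    moreover have "card ({w \<in> out_nbrs E u. (w \<in> S) = (u \<in> S)} \<union> {w \<in> out_nbrs E u. (w \<in> S) \<noteq> (u \<in> S)})
      = card {w \<in> out_nbrs E u. (w \<in> S) = (u \<in> S)} + card {w \<in> out_nbrs E u. (w \<in> S) \<noteq> (u \<in> S)}"
      by (rule card_Un_disjoint) (use fin_out[of u] in auto)
    ultimately show ?thesis by simp
  qed
  have p: "real (card (out_nbrs E u)) > 0" using card_out_pos[OF assms] by simp
  have "real (card {w \<in> out_nbrs E u. (w \<in> S) = (u \<in> S)}) = real (card (out_nbrs E u)) - real (card {w \<in> out_nbrs E u. (w \<in> S) \<noteq> (u \<in> S)})"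
    using c by linarith
  then have "real (card {w \<in> out_nbrs E u. (w \<in> S) = (u \<in> S)}) / real (card (out_nbrs E u))
     = 1 - real (card {w \<in> out_nbrs E u. (w \<in> S) \<noteq> (u \<in> S)}) / real (card (out_nbrs E u))"
    using p by (simp add: diff_divide_distrib)
  then show ?thesis unfolding trm_def dtrm_def e by (simp add: right_diff_distrib)
qed

lemma stay: "1 - moran_step V E r S S = (\<Sum>u\<in>V. dtrm S u)"
proof -
  have "moran_step V E r S S = (\<Sum>u\<in>V. fitness r S u / total_fitness V r S - dtrm S u)"
    unfolding step_eq by (rule sum.cong) (auto simp: trm_stay)
  then show ?thesis using fitsum[of S] by (simp add: sum_subtractf)
qed

lemma step_empty: "moran_step V E r {} {} = 1"
proof -
  have "(\<Sum>u\<in>V. dtrm {} u) = 0" by (simp add: dtrm_def)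
  then show ?thesis using stay[of "{}"] by simp
qed

abbreviation mp where "mp t S \<equiv> moran_prob V E r t S {}"

lemma mp_nonneg: "mp t S \<ge> 0"
  by (induction t arbitrary: S) (auto intro!: sum_nonneg mult_nonneg_nonneg step_nonneg)

lemma mp_le1: "S \<subseteq> V \<Longrightarrow> mp t S \<le> 1"
proof (induction t arbitrary: S)
  case 0 then show ?case by simp
next
  case (Suc t)
  have "mp (Suc t) S \<le> (\<Sum>S''\<in>Pow V. moran_step V E r S S'' * 1)"
    unfolding moran_prob.simps
    by (rule sum_mono, rule mult_left_mono, auto intro: Suc.IH step_nonneg)
  then show ?case using rowsum[OF Suc.prems] by simp
qed

lemma mp_one: "mp (Suc 0) S = moran_step V E r S {}"
  using finV by (simp add: sum.delta' if_distrib cong: if_cong)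

lemma mp_mono: "mp t S \<le> mp (Suc t) S"
proof (induction t arbitrary: S)
  case 0 then show ?case unfolding mp_one using step_empty step_nonneg by simp
next
  case (Suc t)
  have a: "mp (Suc (Suc t)) S = (\<Sum>S''\<in>Pow V. moran_step V E r S S'' * mp (Suc t) S'')"
    by (rule moran_prob.simps(2))
  have b: "mp (Suc t) S = (\<Sum>S''\<in>Pow V. moran_step V E r S S'' * mp t S'')"
    by (rule moran_prob.simps(2))
  have "\<And>S''. moran_step V E r S S'' * mp t S'' \<le> moran_step V E r S S'' * mp (Suc t) S''"
    using Suc.IH step_nonneg mult_left_mono by blast
  then show ?case unfolding a b by (rule sum_mono)
qed

definition ext where "ext S = extinction_prob V E r S"

lemma bdd: "S \<subseteq> V \<Longrightarrow> bdd_above (range (\<lambda>t. mp t S))"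
  by (rule bdd_aboveI2[where M=1]) (rule mp_le1)

lemma lim: "S \<subseteq> V \<Longrightarrow> (\<lambda>t. mp t S) \<longlonglongrightarrow> ext S"
  unfolding ext_def extinction_prob_def
  by (rule LIMSEQ_incseq_SUP[OF bdd], auto intro: incseq_SucI mp_mono)

lemma ext_nonneg: "S \<subseteq> V \<Longrightarrow> ext S \<ge> 0"
  using lim by (rule LIMSEQ_le_const) (auto intro: mp_nonneg)

lemma ext_empty: "ext {} = 1"
proof -
  have g: "mp t {} \<ge> 1" for t
  proof (induction t)
    case (Suc t) then show ?case using mp_mono[of t "{}"] by linarith
  qed simp
  have "mp t {} = 1" for t using g[of t] mp_le1[of "{}" t] by simp
  then show ?thesis using lim[of "{}"] LIMSEQ_unique by (simp add: LIMSEQ_const_iff)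
qed

lemma ext_ge: assumes "S \<subseteq> V" "T \<subseteq> Pow V"
  shows "ext S \<ge> (\<Sum>S'\<in>T. moran_step V E r S S' * ext S')"
proof -
  have fT: "finite T" using assms(2) finV finite_subset by blast
  have "(\<lambda>t. \<Sum>S'\<in>T. moran_step V E r S S' * mp t S') \<longlonglongrightarrow> (\<Sum>S'\<in>T. moran_step V E r S S' * ext S')"
    using assms(2) by (intro tendsto_sum tendsto_mult_left lim) auto
  moreover have "(\<lambda>t. mp (Suc t) S) \<longlonglongrightarrow> ext S" using lim[OF assms(1)] by (rule LIMSEQ_Suc)
  moreover have "(\<Sum>S'\<in>T. moran_step V E r S S' * mp t S') \<le> mp (Suc t) S" for t
    unfolding moran_prob.simps(2)
    by (rule sum_mono2[OF _ assms(2)], simp add: finV, auto intro: mult_nonneg_nonneg step_nonneg mp_nonneg)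
  ultimately show ?thesis by (intro LIMSEQ_le) auto
qed


definition iota where "iota x = (\<Sum>u\<in>V-{x}. if x \<in> out_nbrs E u then 1 / real (card (out_nbrs E u)) else 0)"

lemma iota_nonneg: "iota x \<ge> 0"
  unfolding iota_def by (rule sum_nonneg) auto

lemma dsum_single: assumes "x \<in> V" "x \<notin> out_nbrs E x"
  shows "(\<Sum>u\<in>V. dtrm {x} u) = (r + iota x) / total_fitness V r {x}"
proof -
  have "dtrm {x} x = r / total_fitness V r {x}"
  proof -
    have "{w \<in> out_nbrs E x. (w \<in> {x}) \<noteq> (x \<in> {x})} = out_nbrs E x" using assms(2) by auto
    then show ?thesis unfolding dtrm_def using card_out_pos[OF assms(1)] by (simp add: fitness_def)
  qed
  moreover have "dtrm {x} u = (if x \<in> out_nbrs E u then 1 / real (card (out_nbrs E u)) else 0) / total_fitness V r {x}"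
    if "u \<in> V - {x}" for u
  proof -
    have "{w \<in> out_nbrs E u. (w \<in> {x}) \<noteq> (u \<in> {x})} = (if x \<in> out_nbrs E u then {x} else {})"
      using that by auto
    then show ?thesis unfolding dtrm_def using that by (simp add: fitness_def)
  qed
  ultimately show ?thesis
    unfolding iota_def using assms(1) finV
    by (simp add: sum.remove[of V x] sum_divide_distrib add_divide_distrib)
qed

lemma empty_single: assumes "x \<in> V"
  shows "moran_step V E r {x} {} \<ge> iota x / total_fitness V r {x}"
proof -
  have "trm {x} {} u = (if x \<in> out_nbrs E u then 1 / real (card (out_nbrs E u)) else 0) / total_fitness V r {x}"
    if "u \<in> V - {x}" for u
  proof -
    have "{w \<in> out_nbrs E u. res {x} u w = {}} = (if x \<in> out_nbrs E u then {x} else {})"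
      using that by (auto simp: res_def)
    then show ?thesis unfolding trm_def using that by (simp add: fitness_def)
  qed
  then have "(\<Sum>u\<in>V-{x}. trm {x} {} u) = iota x / total_fitness V r {x}"
    unfolding iota_def by (simp add: sum_divide_distrib)
  then show ?thesis using step_lower[of "V-{x}" "{x}" "{}"] by simp
qed

lemma ext_single: assumes "x \<in> V" "x \<notin> out_nbrs E x"
  shows "ext {x} \<ge> iota x / (iota x + r)"
proof -
  define W where "W = total_fitness V r {x}"
  have W: "W > 0" unfolding W_def by (rule W_pos)
  have "ext {x} \<ge> (\<Sum>S'\<in>{{}, {x}}. moran_step V E r {x} S' * ext S')"
    using assms by (intro ext_ge) auto
  then have "ext {x} \<ge> moran_step V E r {x} {} + moran_step V E r {x} {x} * ext {x}"
    by (simp add: ext_empty)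
  moreover have "moran_step V E r {x} {x} = 1 - (r + iota x) / W"
    using stay[of "{x}"] dsum_single[OF assms] unfolding W_def by simp
  moreover have "moran_step V E r {x} {} \<ge> iota x / W" using empty_single[OF assms(1)] W_def by simp
  ultimately have "ext {x} * ((r + iota x) / W) \<ge> iota x / W"
    by (simp add: algebra_simps)
  then have "ext {x} * (r + iota x) \<ge> iota x" using W by (simp add: field_simps)
  then show ?thesis using rpos iota_nonneg[of x] by (simp add: field_simps)
qed


lemma iota_lower: assumes "U \<subseteq> V - {x}" "\<And>u. u \<in> U \<Longrightarrow> x \<in> out_nbrs E u"
  shows "iota x \<ge> (\<Sum>u\<in>U. 1 / real (card (out_nbrs E u)))"
proof -
  have "(\<Sum>u\<in>U. 1 / real (card (out_nbrs E u))) = (\<Sum>u\<in>U. if x \<in> out_nbrs E u then 1 / real (card (out_nbrs E u)) else 0)"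
    using assms(2) by simp
  also have "\<dots> \<le> iota x" unfolding iota_def
    by (rule sum_mono2) (use finV assms(1) in auto)
  finally show ?thesis .
qed

lemma ext_single1: assumes "x \<in> V" "x \<notin> out_nbrs E x" "iota x \<ge> 1"
  shows "ext {x} \<ge> 1 / (1 + r)"
proof -
  have "1 / (1 + r) \<le> iota x / (iota x + r)"
    using assms(3) rpos by (simp add: field_simps)
  then show ?thesis using ext_single[OF assms(1,2)] by linarith
qed

end


abbreviation "MV k l m \<equiv> fst (megastar k l m)"
abbreviation "ME k l m \<equiv> snd (megastar k l m)"

lemma MV_eq: "MV k l m = insert Centre ({Res i j | i j. i < l \<and> j < m} \<union> {Feeder i | i. i < l}
                    \<union> {Clq i j | i j. i < l \<and> j < k})"
  by (simp add: megastar_def)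

lemma out_C: "out_nbrs (ME k l m) Centre = {Res i j | i j. i < l \<and> j < m}"
  by (auto simp: out_nbrs_def megastar_def)

lemma out_R: "i < l \<Longrightarrow> j < m \<Longrightarrow> out_nbrs (ME k l m) (Res i j) = {Feeder i}"
  by (auto simp: out_nbrs_def megastar_def)

lemma out_F: "i < l \<Longrightarrow> out_nbrs (ME k l m) (Feeder i) = {Clq i j | j. j < k}"
  by (auto simp: out_nbrs_def megastar_def)

lemma out_K: "i < l \<Longrightarrow> j < k \<Longrightarrow> out_nbrs (ME k l m) (Clq i j) = insert Centre {Clq i j' | j'. j' < k \<and> j' \<noteq> j}"
  by (auto simp: out_nbrs_def megastar_def)

lemma E_sub: "ME k l m \<subseteq> MV k l m \<times> MV k l m"
  by (auto simp: megastar_def)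

lemma finV: "finite (MV k l m)"
proof -
  have "{Res i j | i j. i < l \<and> j < m} = (\<lambda>(i,j). Res i j) ` ({..<l} \<times> {..<m})" by auto
  moreover have "{Clq i j | i j. i < l \<and> j < k} = (\<lambda>(i,j). Clq i j) ` ({..<l} \<times> {..<k})" by auto
  moreover have "{Feeder i | i. i < l} = Feeder ` {..<l}" by auto
  ultimately show ?thesis unfolding MV_eq by simp
qed

lemma card_R: "card {Res i j | i j. i < l \<and> j < m} = l * m"
proof -
  have "{Res i j | i j. i < l \<and> j < m} = (\<lambda>(i,j). Res i j) ` ({..<l} \<times> {..<m})" by auto
  moreover have "inj_on (\<lambda>(i,j). Res i j) ({..<l} \<times> {..<m})" by (auto simp: inj_on_def)
  ultimately show ?thesis by (simp add: card_image card_cartesian_product)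
qed

lemma card_K: "card {Clq i j | i j. i < l \<and> j < k} = l * k"
proof -
  have "{Clq i j | i j. i < l \<and> j < k} = (\<lambda>(i,j). Clq i j) ` ({..<l} \<times> {..<k})" by auto
  moreover have "inj_on (\<lambda>(i,j). Clq i j) ({..<l} \<times> {..<k})" by (auto simp: inj_on_def)
  ultimately show ?thesis by (simp add: card_image card_cartesian_product)
qed

lemma card_F: "card {Feeder i | i. i < l} = l"
proof -
  have "{Feeder i | i. i < l} = Feeder ` {..<l}" by auto
  then show ?thesis by (simp add: card_image inj_on_def)
qed

lemma card_rowK: "card {Clq i j | j. j < k} = k"
proof -
  have "{Clq i j | j. j < k} = Clq i ` {..<k}" by auto
  then show ?thesis by (simp add: card_image inj_on_def)
qed

lemma card_rowK': "j < k \<Longrightarrow> card {Clq i j' | j'. j' < k \<and> j' \<noteq> j} = k - 1"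
proof -
  assume "j < k"
  have "{Clq i j' | j'. j' < k \<and> j' \<noteq> j} = Clq i ` ({..<k} - {j})" by auto
  then show ?thesis using \<open>j < k\<close> by (simp add: card_image inj_on_def)
qed

lemma card_rowR: "card {Res i j' | j'. j' < m} = m"
proof -
  have "{Res i j' | j'. j' < m} = Res i ` {..<m}" by auto
  then show ?thesis by (simp add: card_image inj_on_def)
qed

lemma card_rowR': "j < m \<Longrightarrow> card {Res i j' | j'. j' < m \<and> j' \<noteq> j} = m - 1"
proof -
  assume "j < m"
  have "{Res i j' | j'. j' < m \<and> j' \<noteq> j} = Res i ` ({..<m} - {j})" by auto
  then show ?thesis using \<open>j < m\<close> by (simp add: card_image inj_on_def)
qed

lemma gctx_mega: assumes "0 < k" "0 < l" "0 < m" "r > 0" shows "gctx (MV k l m) (ME k l m) r"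
proof
  show "finite (MV k l m)" by (rule finV)
  show "MV k l m \<noteq> {}" by (simp add: megastar_def)
  show "ME k l m \<subseteq> MV k l m \<times> MV k l m" by (rule E_sub)
  show "r > 0" by fact
  fix u assume "u \<in> MV k l m"
  then show "out_nbrs (ME k l m) u \<noteq> {}"
    unfolding MV_eq using assms by (auto simp: out_C out_R out_F out_K)
qed

lemma irrefl: "u \<notin> out_nbrs (ME k l m) u"
  by (auto simp: out_nbrs_def megastar_def)


locale mega =
  fixes k l m :: nat and r :: real
  assumes kpos: "0 < k" and lpos: "0 < l" and mpos: "0 < m" and rpos': "r > 0"
begin

sublocale gctx "MV k l m" "ME k l m" r
  using gctx_mega kpos lpos mpos rpos' by blast

lemma ext_F: assumes "i < l" shows "ext {Feeder i} \<ge> 1 / (1 + r)"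
proof (rule ext_single1)
  show "Feeder i \<in> MV k l m" using assms by (simp add: megastar_def)
  show "Feeder i \<notin> out_nbrs (ME k l m) (Feeder i)" by (rule irrefl)
  have "iota (Feeder i) \<ge> (\<Sum>u\<in>{Res i 0}. 1 / real (card (out_nbrs (ME k l m) u)))"
    by (rule iota_lower) (use assms mpos in \<open>auto simp: MV_eq out_R\<close>)
  then show "iota (Feeder i) \<ge> 1" using assms mpos by (simp add: out_R)
qed

lemma ext_K: assumes "i < l" "j < k" shows "ext {Clq i j} \<ge> 1 / (1 + r)"
proof (rule ext_single1)
  show "Clq i j \<in> MV k l m" using assms by (simp add: megastar_def)
  show "Clq i j \<notin> out_nbrs (ME k l m) (Clq i j)" by (rule irrefl)
  let ?U = "insert (Feeder i) {Clq i j' | j'. j' < k \<and> j' \<noteq> j}"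
  have "iota (Clq i j) \<ge> (\<Sum>u\<in>?U. 1 / real (card (out_nbrs (ME k l m) u)))"
    by (rule iota_lower) (use assms in \<open>auto simp: MV_eq out_F out_K\<close>)
  also have "(\<Sum>u\<in>?U. 1 / real (card (out_nbrs (ME k l m) u))) = (\<Sum>u\<in>?U. 1 / real k)"
  proof (rule sum.cong)
    fix u assume "u \<in> ?U"
    then show "1 / real (card (out_nbrs (ME k l m) u)) = 1 / real k"
    proof
      assume "u = Feeder i" then show ?thesis using assms by (simp add: out_F card_rowK)
    next
      assume "u \<in> {Clq i j' | j'. j' < k \<and> j' \<noteq> j}"
      then obtain j' where "u = Clq i j'" "j' < k" "j' \<noteq> j" by blast
      moreover have "Centre \<notin> {Clq i j'' | j''. j'' < k \<and> j'' \<noteq> j'}" by auto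
      ultimately show ?thesis using assms
        by (simp add: out_K card_rowK' card_insert_if finite_subset[OF _ finV])
    qed
  qed simp
  also have "\<dots> = 1"
  proof -
    have f: "finite {Clq i j' | j'. j' < k \<and> j' \<noteq> j}"
      by (rule finite_subset[OF _ finV]) (use assms in \<open>auto simp: megastar_def\<close>)
    have "card ?U = k" using f assms kpos by (simp add: card_rowK')
    then show ?thesis using kpos by simp
  qed
  finally show "iota (Clq i j) \<ge> 1" .
qed


lemma notin_out_res: assumes "u \<in> MV k l m" "u \<noteq> Centre"
  shows "Res i j \<notin> out_nbrs (ME k l m) u"
  using assms unfolding MV_eq by (auto simp: out_R out_F out_K)

lemma iota_R: assumes "i < l" "j < m" shows "iota (Res i j) = 1 / (real l * real m)"
proof -
  have C: "Centre \<in> MV k l m - {Res i j}" by (simp add: megastar_def)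
  have "iota (Res i j) = (if Res i j \<in> out_nbrs (ME k l m) Centre then 1 / real (card (out_nbrs (ME k l m) Centre)) else 0)
     + (\<Sum>u\<in>MV k l m - {Res i j} - {Centre}. if Res i j \<in> out_nbrs (ME k l m) u then 1 / real (card (out_nbrs (ME k l m) u)) else 0)"
    unfolding iota_def by (rule sum.remove) (use C finV in auto)
  also have "(\<Sum>u\<in>MV k l m - {Res i j} - {Centre}. if Res i j \<in> out_nbrs (ME k l m) u then 1 / real (card (out_nbrs (ME k l m) u)) else 0) = 0"
    by (rule sum.neutral) (use notin_out_res in auto)
  finally show ?thesis using assms by (simp add: out_C card_R)
qed

lemma ext_R: assumes "i < l" "j < m" shows "ext {Res i j} \<ge> 1 / (real l * (r^2 + r) + 2)"
proof -
  define x where "x = Res i j"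
  define A where "A = {x}"
  define B where "B = {Feeder i, x}"
  define WA where "WA = total_fitness (MV k l m) r A"
  define WB where "WB = total_fitness (MV k l m) r B"
  define eps where "eps = 1 / (real l * real m)"
  define P where "P = moran_step (MV k l m) (ME k l m) r"
  have WA: "WA > 0" unfolding WA_def by (rule W_pos)
  have WB: "WB > 0" unfolding WB_def by (rule W_pos)
  have xV: "x \<in> MV k l m" using assms unfolding x_def by (simp add: megastar_def)
  have FV: "Feeder i \<in> MV k l m" using assms by (simp add: megastar_def)
  have AB: "A \<noteq> B" "A \<noteq> {}" "B \<noteq> {}" unfolding A_def B_def x_def by auto
  have AV: "A \<subseteq> MV k l m" "B \<subseteq> MV k l m" using xV FV unfolding A_def B_def by auto
  have yA0: "ext A \<ge> 0" "ext B \<ge> 0" using AV ext_nonneg by auto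
  have e1: "ext A \<ge> P A {} + P A A * ext A + P A B * ext B"
  proof -
    have "ext A \<ge> (\<Sum>S'\<in>{{}, A, B}. P A S' * ext S')"
      unfolding P_def using AV by (intro ext_ge) auto
    then show ?thesis using AB by (simp add: ext_empty)
  qed
  have e2: "ext B \<ge> P B A * ext A + P B B * ext B"
  proof -
    have "ext B \<ge> (\<Sum>S'\<in>{A, B}. P B S' * ext S')"
      unfolding P_def using AV by (intro ext_ge) auto
    then show ?thesis using AB by simp
  qed
  have pAA: "P A A = 1 - (r + eps) / WA"
    using stay[of A] dsum_single[OF xV irrefl] iota_R[OF assms]
    unfolding P_def A_def WA_def eps_def x_def by simp
  have pA0: "P A {} \<ge> eps / WA"
    using empty_single[OF xV] iota_R[OF assms] unfolding P_def A_def WA_def eps_def x_def by simp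
  have pAB: "P A B \<ge> r / WA"
  proof -
    have "trm A B x = r / WA"
    proof -
      have "{w \<in> out_nbrs (ME k l m) x. res A x w = B} = {Feeder i}"
        using assms unfolding x_def A_def B_def by (auto simp: out_R res_def)
      then show ?thesis using assms unfolding trm_def WA_def x_def A_def by (simp add: out_R fitness_def)
    qed
    then show ?thesis using step_lower[of "{x}" A B] xV unfolding P_def by simp
  qed
  have pBA: "P B A \<ge> (real m - 1) / WB"
  proof -
    let ?U = "{Res i j' | j'. j' < m \<and> j' \<noteq> j}"
    have UV: "?U \<subseteq> MV k l m" using assms by (auto simp: MV_eq)
    have "trm B A u = 1 / WB" if "u \<in> ?U" for u
    proof -
      obtain j' where j': "u = Res i j'" "j' < m" "j' \<noteq> j" using \<open>u \<in> ?U\<close> by blast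
      have "{w \<in> out_nbrs (ME k l m) u. res B u w = A} = {Feeder i}"
        using assms j' unfolding x_def A_def B_def by (auto simp: out_R res_def)
      moreover have "u \<notin> B" using j' unfolding B_def x_def by auto
      ultimately show ?thesis using assms j' unfolding trm_def WB_def by (simp add: out_R fitness_def)
    qed
    then have "(\<Sum>u\<in>?U. trm B A u) = real (m - 1) / WB"
      using card_rowR'[OF assms(2), of i] by simp
    then show ?thesis using step_lower[OF UV, of B A] mpos unfolding P_def by (simp add: of_nat_diff)
  qed
  have dB: "1 - P B B \<le> (eps + r + real m) / WB"
  proof -
    let ?R = "{Res i j' | j'. j' < m}"
    let ?D = "insert Centre (insert (Feeder i) ?R)"
    have fR: "finite ?R" by (rule finite_subset[OF _ finV]) (use assms in \<open>auto simp: MV_eq\<close>)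
    have DV: "?D \<subseteq> MV k l m" using assms by (auto simp: MV_eq)
    have z: "dtrm B u = 0" if "u \<in> MV k l m - ?D" for u
    proof -
      have h: "{w \<in> out_nbrs (ME k l m) u. (w \<in> B) \<noteq> (u \<in> B)} = {}"
        using that unfolding MV_eq B_def x_def by (auto simp: out_R out_F out_K)
      show ?thesis unfolding dtrm_def h by simp
    qed
    have "(\<Sum>u\<in>MV k l m. dtrm B u) = (\<Sum>u\<in>?D. dtrm B u)"
      by (rule sum.mono_neutral_right[OF finV DV]) (use z in auto)
    also have "\<dots> = dtrm B Centre + dtrm B (Feeder i) + (\<Sum>u\<in>?R. dtrm B u)"
      using fR by simp
    also have "dtrm B Centre = eps / WB"
    proof -
      have h: "{w \<in> out_nbrs (ME k l m) Centre. (w \<in> B) \<noteq> (Centre \<in> B)} = {x}"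
        using assms unfolding B_def x_def by (auto simp: out_C)
      have "Centre \<notin> B" unfolding B_def x_def by auto
      then show ?thesis unfolding dtrm_def h using assms
        by (simp add: out_C card_R fitness_def eps_def WB_def)
    qed
    also have "dtrm B (Feeder i) = r / WB"
    proof -
      have h: "{w \<in> out_nbrs (ME k l m) (Feeder i). (w \<in> B) \<noteq> (Feeder i \<in> B)} = {Clq i j | j. j < k}"
        using assms unfolding B_def x_def by (auto simp: out_F)
      have "Feeder i \<in> B" unfolding B_def by auto
      then show ?thesis unfolding dtrm_def h using assms kpos
        by (simp add: out_F card_rowK fitness_def WB_def)
    qed
    also have "(\<Sum>u\<in>?R. dtrm B u) \<le> real (card ?R) * (1 / WB)"
    proof (rule sum_bounded_above)
      fix u assume "u \<in> ?R"
      then obtain j' where j': "u = Res i j'" "j' < m" by blast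
      show "dtrm B u \<le> 1 / WB"
      proof (cases "j' = j")
        case True
        have h: "{w \<in> out_nbrs (ME k l m) u. (w \<in> B) \<noteq> (u \<in> B)} = {}"
          using assms j' True unfolding B_def x_def by (auto simp: out_R)
        show ?thesis unfolding dtrm_def h using WB by simp
      next
        case False
        have "card {w \<in> out_nbrs (ME k l m) u. (w \<in> B) \<noteq> (u \<in> B)} \<le> card {Feeder i}"
          using assms j' by (intro card_mono) (auto simp: out_R)
        moreover have "u \<notin> B" using j' False unfolding B_def x_def by auto
        ultimately show ?thesis unfolding dtrm_def WB_def using assms j' WB
          by (auto simp: out_R fitness_def divide_simps WB_def)
      qed
    qed
    finally show ?thesis using stay[of B] card_rowR[of i m] unfolding P_def
      by (simp add: add_divide_distrib)
  qed
  have L: "real l \<ge> 1" "real m \<ge> 1" using lpos mpos by auto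
  have epos: "eps > 0" unfolding eps_def using L by simp
  have elm: "real l * eps * real m = 1" unfolding eps_def using L by simp
  have i1: "(r + eps) * ext A \<ge> eps + r * ext B"
  proof -
    have "ext A * ((r + eps) / WA) \<ge> P A {} + P A B * ext B"
      using e1 pAA by (simp add: algebra_simps)
    moreover have "P A B * ext B \<ge> r / WA * ext B" using mult_right_mono[OF pAB yA0(2)] by simp
    ultimately have "ext A * ((r + eps) / WA) \<ge> eps / WA + r / WA * ext B" using pA0 by linarith
    then have "WA * (eps + r * ext B) \<le> WA * ((r + eps) * ext A)" using WA by (simp add: field_simps)
    then show ?thesis using WA mult_le_cancel_left_pos by blast
  qed
  have i2: "(eps + r + real m) * ext B \<ge> (real m - 1) * ext A"
  proof -
    have "ext B * (1 - P B B) \<ge> P B A * ext A" using e2 by (simp add: algebra_simps)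
    moreover have "P B A * ext A \<ge> (real m - 1) / WB * ext A" using mult_right_mono[OF pBA yA0(1)] by simp
    moreover have "ext B * (1 - P B B) \<le> ext B * ((eps + r + real m) / WB)" using mult_left_mono[OF dB yA0(2)] by simp
    ultimately have "ext B * ((eps + r + real m) / WB) \<ge> (real m - 1) / WB * ext A" by linarith
    then have "WB * ((real m - 1) * ext A) \<le> WB * ((eps + r + real m) * ext B)" using WB by (simp add: field_simps)
    then show ?thesis using WB mult_le_cancel_left_pos by blast
  qed
  define K where "K = (r + eps) * (eps + r + real m) - r * (real m - 1)"
  define N where "N = eps * (eps + r + real m)"
  define Q where "Q = real l * (r^2 + r) + 2"
  have Npos: "N > 0" unfolding N_def using epos rpos L by simp
  have Qpos: "Q > 0" unfolding Q_def using rpos L by (simp add: add_pos_nonneg)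
  have KA: "K * ext A \<ge> N"
  proof -
    have "(r + eps) * (eps + r + real m) * ext A \<ge> (eps + r * ext B) * (eps + r + real m)"
      using i1 epos rpos L by (simp add: mult_right_mono mult.commute mult.left_commute)
    moreover have "r * ((eps + r + real m) * ext B) \<ge> r * ((real m - 1) * ext A)"
      using i2 rpos by (simp add: mult_left_mono)
    ultimately show ?thesis unfolding K_def N_def by (simp add: algebra_simps)
  qed
  have KQ: "K \<le> Q * N"
  proof -
    have "Q * N - K = real l * (r^2 + r) * (eps^2 + r * eps) + eps^2 + eps * real m"
      unfolding Q_def N_def K_def using elm by (simp add: algebra_simps power2_eq_square)
    moreover have "real l * (r^2 + r) * (eps^2 + r * eps) \<ge> 0" using L rpos epos by simp
    moreover have "eps * real m \<ge> 0" using epos by simp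
    ultimately show ?thesis by (smt (verit) zero_le_power2)
  qed
  have "Q * N * ext A \<ge> N" using KA KQ yA0 mult_right_mono[OF KQ, of "ext A"] by linarith
  then have "Q * ext A \<ge> 1" using Npos by (simp add: mult.commute mult.left_commute)
  then show ?thesis using Qpos unfolding Q_def A_def x_def by (simp add: field_simps)
qed

end



lemma arith_final:
  fixes L M K s S :: real
  assumes L: "L \<ge> 1" and M: "M \<ge> 1" and K: "K \<ge> 1" and s: "s > 0"
    and ss: "s^2 = 1 + L*M + L + L*K"
    and S: "S \<ge> L*M/(6*L+2) + (L+L*K)/3"
  shows "208 * S > s"
proof -
  have LM1: "L*M \<ge> 1*1" by (rule mult_mono) (use L M in auto)
  have LM2: "L*K \<ge> 1*1" by (rule mult_mono) (use L K in auto)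
  have LM: "L*M \<ge> 1" "L*K \<ge> 1" using LM1 LM2 by auto
  have ss': "s*s = 1 + L*M + L + L*K" using ss by (simp only: power2_eq_square)
  have sq: "s*s \<ge> 4" using ss' LM L by linarith
  have s2: "s \<ge> 2"
  proof (rule ccontr)
    assume "\<not> s \<ge> 2"
    then have "s < 2" by simp
    then have "s*s < 2*s" using s by (intro mult_strict_right_mono) auto
    then show False using sq \<open>s < 2\<close> by linarith
  qed
  have t1: "L*M/(6*L+2) \<ge> 0" using L M by simp
  show ?thesis
  proof (cases "10 * L \<ge> s")
    case True
    have "(L+L*K)/3 = L/3 + L*K/3" by simp
    then have "S \<ge> L/3" using S t1 LM by linarith
    then show ?thesis using True s by linarith
  next
    case False
    have d: "6*L+2 \<le> 2*s" using False s2 by linarith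
    have pos: "6*L+2 > 0" using L by linarith
    have t2: "L*M/(6*L+2) \<ge> L*M/(2*s)"
      using d pos LM by (intro divide_left_mono) auto
    show ?thesis
    proof (cases "L*M \<ge> L + L*K")
      case True
      have "s*s-1 \<le> L*M*2" using True ss' by linarith
      then have a: "L*M \<ge> (s*s-1)/2" by (simp add: pos_divide_le_eq)
      have b: "L*M/(2*s) \<ge> ((s*s-1)/2)/(2*s)" using s a by (intro divide_right_mono) auto
      have c: "(L+L*K)/3 \<ge> 0" using L K by simp
      have e: "((s*s-1)/2)/(2*s) = (s*s-1)/(4*s)" by simp
      have "S \<ge> (s*s-1)/(4*s)" using S t2 b c e by linarith
      then have f: "208 * S \<ge> 208 * ((s*s-1)/(4*s))" by (rule mult_left_mono) simp
      have g: "208 * ((s*s-1)/(4*s)) = 52*(s*s-1)/s" using s by (simp add: field_simps)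
      have "52*(s*s-1) = 52*(s*s) - 52" by (simp add: algebra_simps)
      then have "52*(s*s-1) > s*s" using sq by linarith
      then have "52*(s*s-1)/s > s*s/s" using s by (intro divide_strict_right_mono) auto
      then have "52*(s*s-1)/s > s" using s by simp
      then show ?thesis using f g by linarith
    next
      case False
      have "s*s-1 \<le> 2*L + 2*(L*K)" using False ss' by linarith
      then have "s*s-1 \<le> (L + L*K)*2" by (simp add: algebra_simps)
      then have "L + L*K \<ge> (s*s-1)/2" by (simp add: pos_divide_le_eq)
      then have "((s*s-1)/2)/3 \<le> (L + L*K)/3" by (rule divide_right_mono) simp
      moreover have "((s*s-1)/2)/3 = (s*s-1)/6" by simp
      ultimately have h: "S \<ge> (s*s-1)/6" using S t1 by linarith
      have "(s-2)*(2*s+1) \<ge> 0" using s2 s by (intro mult_nonneg_nonneg) auto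
      moreover have "(s-2)*(2*s+1) = 2*(s*s) - 3*s - 2" by (simp add: algebra_simps)
      ultimately have "4*(s*s) - 4 \<ge> 6*s" by linarith
      then have "(s*s-1)/6 \<ge> s/4" by (simp add: field_simps algebra_simps)
      then show ?thesis using h s by linarith
    qed
  qed
qed


lemma card_MV: "card (MV k l m) = 1 + l*m + l + l*k"
proof -
  let ?R = "{Res i j | i j. i < l \<and> j < m}" and ?F = "{Feeder i | i. i < l}" and ?C = "{Clq i j | i j. i < l \<and> j < k}"
  have f: "finite ?R" "finite ?F" "finite ?C" using finV[of k l m] by (auto simp: MV_eq)
  have c1: "card (?R \<union> ?F \<union> ?C) = card (?R \<union> ?F) + card ?C" by (rule card_Un_disjoint) (use f in auto)
  have c2: "card (?R \<union> ?F) = card ?R + card ?F" by (rule card_Un_disjoint) (use f in auto)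
  have "card (?R \<union> ?F \<union> ?C) = card ?R + card ?F + card ?C" using c1 c2 by simp
  moreover have "Centre \<notin> ?R \<union> ?F \<union> ?C" by auto
  ultimately show ?thesis unfolding MV_eq using f by (simp add: card_R card_F card_K)
qed

context mega begin

lemma sum_lower: "(\<Sum>v\<in>MV k l m. ext {v}) \<ge> real (l*m) / (real l*(r^2+r)+2) + real (l + l*k) / (1+r)"
proof -
  let ?R = "{Res i j | i j. i < l \<and> j < m}" and ?F = "{Feeder i | i. i < l}" and ?C = "{Clq i j | i j. i < l \<and> j < k}"
  have f: "finite ?R" "finite ?F" "finite ?C" using finV by (auto simp: MV_eq)
  have sub: "?R \<union> ?F \<union> ?C \<subseteq> MV k l m" by (auto simp: MV_eq)
  have "(\<Sum>v\<in>MV k l m. ext {v}) \<ge> (\<Sum>v\<in>?R \<union> ?F \<union> ?C. ext {v})"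
    by (rule sum_mono2[OF finV sub]) (auto intro: ext_nonneg)
  also have "(\<Sum>v\<in>?R \<union> ?F \<union> ?C. ext {v}) = (\<Sum>v\<in>?R. ext {v}) + (\<Sum>v\<in>?F. ext {v}) + (\<Sum>v\<in>?C. ext {v})"
  proof -
    have c1: "(\<Sum>v\<in>?R \<union> ?F \<union> ?C. ext {v}) = (\<Sum>v\<in>?R \<union> ?F. ext {v}) + (\<Sum>v\<in>?C. ext {v})"
      by (rule sum.union_disjoint) (use f in auto)
    have c2: "(\<Sum>v\<in>?R \<union> ?F. ext {v}) = (\<Sum>v\<in>?R. ext {v}) + (\<Sum>v\<in>?F. ext {v})"
      by (rule sum.union_disjoint) (use f in auto)
    show ?thesis using c1 c2 by simp
  qed
  finally have a: "(\<Sum>v\<in>MV k l m. ext {v}) \<ge> (\<Sum>v\<in>?R. ext {v}) + (\<Sum>v\<in>?F. ext {v}) + (\<Sum>v\<in>?C. ext {v})" .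
  have b: "(\<Sum>v\<in>?R. ext {v}) \<ge> real (card ?R) * (1 / (real l*(r^2+r)+2))"
    by (rule sum_bounded_below) (auto intro: ext_R)
  have c: "(\<Sum>v\<in>?F. ext {v}) \<ge> real (card ?F) * (1 / (1+r))"
    by (rule sum_bounded_below) (auto intro: ext_F)
  have d: "(\<Sum>v\<in>?C. ext {v}) \<ge> real (card ?C) * (1 / (1+r))"
    by (rule sum_bounded_below) (auto intro: ext_K)
  have "real (card ?F) * (1 / (1+r)) + real (card ?C) * (1 / (1+r)) = real (l + l*k) / (1+r)"
    by (simp add: card_F card_K add_divide_distrib)
  moreover have "real (card ?R) * (1 / (real l*(r^2+r)+2)) = real (l*m) / (real l*(r^2+r)+2)"
    by (simp add: card_R)
  ultimately show ?thesis using a b c d by linarith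
qed

end

lemma finite_small: "finite {G \<in> megastars. card (fst G) < n0}"
proof -
  have "{G \<in> megastars. card (fst G) < n0} \<subseteq> (\<lambda>(k,l,m). megastar k l m) ` ({..<n0} \<times> {..<n0} \<times> {..<n0})"
  proof
    fix G assume "G \<in> {G \<in> megastars. card (fst G) < n0}"
    then obtain k l m where G: "G = megastar k l m" "0 < k" "0 < l" "0 < m" "card (fst G) < n0"
      unfolding megastars_def by blast
    then have "1 + l*m + l + l*k < n0" using card_MV[of k l m] by simp
    moreover have "k \<le> l*k" "m \<le> l*m" using G by simp_all
    ultimately have "k < n0" "l < n0" "m < n0" by linarith+
    then show "G \<in> (\<lambda>(k,l,m). megastar k l m) ` ({..<n0} \<times> {..<n0} \<times> {..<n0})"
      using G by (intro image_eqI[where x="(k,l,m)"]) auto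
  qed
  then show ?thesis by (rule finite_subset) simp
qed

theorem theorem1p11:
  shows "\<not> (\<exists>\<Upsilon>. \<Upsilon> \<subseteq> megastars \<and> infinite \<Upsilon> \<and> up_to_fixating zeta \<Upsilon>)"
proof
  assume "\<exists>\<Upsilon>. \<Upsilon> \<subseteq> megastars \<and> infinite \<Upsilon> \<and> up_to_fixating zeta \<Upsilon>"
  then obtain \<Upsilon> where sub: "\<Upsilon> \<subseteq> megastars" and inf: "infinite \<Upsilon>" and fx: "up_to_fixating zeta \<Upsilon>"
    by blast
  from fx obtain n0 where n0: "\<forall>(V, E) \<in> \<Upsilon>. card V \<ge> n0 \<longrightarrow> extinction_prob_uniform V E 2 \<le> zeta 2 (card V)"
  proof -
    have "(2::real) > 1" by simp
    then show ?thesis using fx that unfolding up_to_fixating_def by blast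
  qed
  have "\<exists>G\<in>\<Upsilon>. card (fst G) \<ge> n0"
  proof (rule ccontr)
    assume "\<not> ?thesis"
    then have "\<Upsilon> \<subseteq> {G \<in> megastars. card (fst G) < n0}" using sub by force
    then show False using inf finite_small finite_subset by blast
  qed
  then obtain G where G: "G \<in> \<Upsilon>" "card (fst G) \<ge> n0" by blast
  then obtain k l m where km: "G = megastar k l m" "0 < k" "0 < l" "0 < m"
    using sub unfolding megastars_def by blast
  interpret mega k l m 2 using km by unfold_locales auto
  define n where "n = card (MV k l m)"
  have le: "extinction_prob_uniform (MV k l m) (ME k l m) 2 \<le> zeta 2 n"
  proof -
    have "(\<lambda>(V, E). card V \<ge> n0 \<longrightarrow> extinction_prob_uniform V E 2 \<le> zeta 2 (card V)) G"
      using n0 G(1) by blast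
    then show ?thesis using G(2) unfolding km(1) n_def by (simp add: case_prod_beta)
  qed
  have nval: "real n = 1 + real l * real m + real l + real l * real k"
    unfolding n_def card_MV by simp
  have "n \<ge> 1" unfolding n_def card_MV by simp
  then have npos: "real n > 0" by simp
  define s where "s = sqrt (real n)"
  have spos: "s > 0" unfolding s_def using npos by simp
  have ss: "s^2 = real n" unfolding s_def using npos by simp
  define S where "S = (\<Sum>v\<in>MV k l m. ext {v})"
  have Slow: "S \<ge> real l * real m / (6 * real l + 2) + (real l + real l * real k) / 3"
    using sum_lower unfolding S_def by (simp add: algebra_simps)
  have key: "208 * S > s"
    by (rule arith_final[OF _ _ _ spos _ Slow]) (use km ss nval in auto)
  have z: "zeta 2 n = (1 / s) / 208"
  proof -
    have h1: "(-1/2::real) = - (1/2)" by simp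
    have h2: "real n powr (1/2) = s" unfolding s_def using npos by (intro powr_half_sqrt) simp
    have h3: "real n powr (-1/2) = inverse s" unfolding h1 powr_minus h2 by (rule refl)
    show ?thesis unfolding zeta_def h3 by (simp add: inverse_eq_divide)
  qed
  have u: "extinction_prob_uniform (MV k l m) (ME k l m) 2 = S / (s * s)"
    unfolding extinction_prob_uniform_def S_def ext_def using ss n_def by (simp add: power2_eq_square)
  have "(1 / s) / 208 < S / (s * s)"
  proof -
    have "s * s < 208 * S * s" using key spos by (simp add: mult_strict_right_mono)
    then show ?thesis using spos by (simp add: field_simps)
  qed
  then show False using le z u by linarith
qed

end
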